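(* Let $\Lambda$ be a finite-dimensional algebra over an algebraically closed field $k$ and let $M_1,M_2$ be nonzero uniserial $\Lambda$-modules. Let $$\mathcal{S}(M_1,M_2)=\{1\le l\le\min\{\ell\ell(M_1),\ell\ell(M_2)\}: M_1/J^l(M_1)\simeq \mathrm{Soc}^l(M_2)\}.$$ For each $l\in\mathcal{S}(M_1,M_2)$ fix an isomorphism $M_1/J^l(M_1)\simeq\mathrm{Soc}^l(M_2)$ and let $\alpha_l$ be the composition $M_1\twoheadrightarrow M_1/J^l(M_1)\simeq\mathrm{Soc}^l(M_2)\hookrightarrow M_2$. Then $\{\alpha_l: l\in\mathcal{S}(M_1,M_2)\}$ is a $k$-basis of $\mathrm{Hom}_\Lambda(M_1,M_2)$.
   Context: $J$ denotes the Jacobson radical, $J^l(M)$ the $l$-th radical power of $M$, $\mathrm{Soc}^l(M)$ the $l$-th term of the socle series of $M$, and $\ell\ell(M)$ the Loewy length (smallest $d$ with $J^d(M)=0$). A module is uniserial if its submodules are totally ordered by inclusion. *)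

theory Defs
  imports Main "HOL-Computational_Algebra.Polynomial"
begin

text \<open>The field k is a type 'k; the algebra Lambda is a type 'a of class ring_1
  together with a k-scalar multiplication scal making it a finite-dimensional k-algebra.
  A (left) Lambda-module is an abelian group type 'm with an action act; its k-structure
  is induced via c \<mapsto> scal c 1. The module is the whole type.\<close>

definition alg_closed_field :: "'k::field itself \<Rightarrow> bool" where
  "alg_closed_field _ \<longleftrightarrow> (\<forall>p::'k poly. 0 < degree p \<longrightarrow> (\<exists>x. poly p x = 0))"

definition fd_algebra :: "('k::field \<Rightarrow> 'a::ring_1 \<Rightarrow> 'a) \<Rightarrow> bool" where
  "fd_algebra scal \<longleftrightarrow>
     (\<forall>c x y. scal c (x + y) = scal c x + scal c y) \<and>
     (\<forall>c d x. scal (c + d) x = scal c x + scal d x) \<and>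
     (\<forall>c d x. scal (c * d) x = scal c (scal d x)) \<and>
     (\<forall>x. scal 1 x = x) \<and>
     (\<forall>c x y. scal c (x * y) = scal c x * y) \<and>
     (\<forall>c x y. scal c (x * y) = x * scal c y) \<and>
     (\<exists>B. finite B \<and> (\<forall>x. \<exists>f. x = (\<Sum>b\<in>B. scal (f b) b)))"

definition is_module :: "('a::ring_1 \<Rightarrow> 'm::ab_group_add \<Rightarrow> 'm) \<Rightarrow> bool" where
  "is_module act \<longleftrightarrow>
     (\<forall>a x y. act a (x + y) = act a x + act a y) \<and>
     (\<forall>a b x. act (a + b) x = act a x + act b x) \<and>
     (\<forall>a b x. act (a * b) x = act a (act b x)) \<and>
     (\<forall>x. act 1 x = x)"

definition smul :: "('k::field \<Rightarrow> 'a::ring_1 \<Rightarrow> 'a) \<Rightarrow> ('a \<Rightarrow> 'm \<Rightarrow> 'm) \<Rightarrow> 'k \<Rightarrow> 'm \<Rightarrow> 'm" where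
  "smul scal act c x = act (scal c 1) x"

definition submod :: "('a::ring_1 \<Rightarrow> 'm::ab_group_add \<Rightarrow> 'm) \<Rightarrow> 'm set \<Rightarrow> bool" where
  "submod act N \<longleftrightarrow> 0 \<in> N \<and> (\<forall>x\<in>N. \<forall>y\<in>N. x + y \<in> N) \<and> (\<forall>a. \<forall>x\<in>N. act a x \<in> N)"

text \<open>Submodule generated by a set (sum of submodules = submodule generated by their union).\<close>
definition gen_submod :: "('a::ring_1 \<Rightarrow> 'm::ab_group_add \<Rightarrow> 'm) \<Rightarrow> 'm set \<Rightarrow> 'm set" where
  "gen_submod act X = \<Inter>{N. submod act N \<and> X \<subseteq> N}"

definition left_ideal :: "'a::ring_1 set \<Rightarrow> bool" where
  "left_ideal I \<longleftrightarrow> 0 \<in> I \<and> (\<forall>x\<in>I. \<forall>y\<in>I. x + y \<in> I) \<and> (\<forall>x\<in>I. - x \<in> I)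
     \<and> (\<forall>r. \<forall>x\<in>I. r * x \<in> I)"

definition maximal_left_ideal :: "'a::ring_1 set \<Rightarrow> bool" where
  "maximal_left_ideal I \<longleftrightarrow> left_ideal I \<and> I \<noteq> UNIV \<and>
     (\<forall>K. left_ideal K \<and> I \<subseteq> K \<and> K \<noteq> UNIV \<longrightarrow> K = I)"

definition jacobson :: "'a::ring_1 set" where
  "jacobson = \<Inter>{I. maximal_left_ideal I}"

primrec rad_pow :: "('a::ring_1 \<Rightarrow> 'm::ab_group_add \<Rightarrow> 'm) \<Rightarrow> nat \<Rightarrow> 'm set" where
  "rad_pow act 0 = UNIV"
| "rad_pow act (Suc l) = gen_submod act {act a x | a x. a \<in> jacobson \<and> x \<in> rad_pow act l}"

definition loewy_length :: "('a::ring_1 \<Rightarrow> 'm::ab_group_add \<Rightarrow> 'm) \<Rightarrow> nat" where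
  "loewy_length act = (LEAST d. rad_pow act d = {0})"

definition simple_over :: "('a::ring_1 \<Rightarrow> 'm::ab_group_add \<Rightarrow> 'm) \<Rightarrow> 'm set \<Rightarrow> 'm set \<Rightarrow> bool" where
  "simple_over act N S \<longleftrightarrow> submod act S \<and> N \<subset> S \<and>
     (\<forall>T. submod act T \<and> N \<subseteq> T \<and> T \<subseteq> S \<longrightarrow> T = N \<or> T = S)"

text \<open>Socle series: Soc^0 = 0, Soc^(l+1)/Soc^l = Soc(M/Soc^l), i.e. Soc^(l+1) is the
  sum of Soc^l and all submodules S with S/Soc^l simple.\<close>
primrec soc_ser :: "('a::ring_1 \<Rightarrow> 'm::ab_group_add \<Rightarrow> 'm) \<Rightarrow> nat \<Rightarrow> 'm set" where
  "soc_ser act 0 = {0}"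
| "soc_ser act (Suc l) = gen_submod act (soc_ser act l \<union> \<Union>{S. simple_over act (soc_ser act l) S})"

definition uniserial :: "('a::ring_1 \<Rightarrow> 'm::ab_group_add \<Rightarrow> 'm) \<Rightarrow> bool" where
  "uniserial act \<longleftrightarrow> (\<forall>N1 N2. submod act N1 \<and> submod act N2 \<longrightarrow> N1 \<subseteq> N2 \<or> N2 \<subseteq> N1)"

definition coset :: "'m::ab_group_add \<Rightarrow> 'm set \<Rightarrow> 'm set" where
  "coset x N = (\<lambda>n. x + n) ` N"

text \<open>phi is a Lambda-module isomorphism from the quotient M1/N (cosets, with operations
  defined on representatives) onto the submodule S of M2.\<close>
definition quot_iso :: "('a::ring_1 \<Rightarrow> 'm1::ab_group_add \<Rightarrow> 'm1) \<Rightarrow> ('a \<Rightarrow> 'm2::ab_group_add \<Rightarrow> 'm2)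
    \<Rightarrow> 'm1 set \<Rightarrow> 'm2 set \<Rightarrow> ('m1 set \<Rightarrow> 'm2) \<Rightarrow> bool" where
  "quot_iso act1 act2 N S phi \<longleftrightarrow>
     bij_betw phi (range (\<lambda>x. coset x N)) S \<and>
     (\<forall>x y. phi (coset (x + y) N) = phi (coset x N) + phi (coset y N)) \<and>
     (\<forall>a x. phi (coset (act1 a x) N) = act2 a (phi (coset x N)))"

definition hom :: "('a::ring_1 \<Rightarrow> 'm1::ab_group_add \<Rightarrow> 'm1) \<Rightarrow> ('a \<Rightarrow> 'm2::ab_group_add \<Rightarrow> 'm2)
    \<Rightarrow> ('m1 \<Rightarrow> 'm2) set" where
  "hom act1 act2 = {f. (\<forall>x y. f (x + y) = f x + f y) \<and> (\<forall>a x. f (act1 a x) = act2 a (f x))}"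

definition S_set :: "('a::ring_1 \<Rightarrow> 'm1::ab_group_add \<Rightarrow> 'm1) \<Rightarrow> ('a \<Rightarrow> 'm2::ab_group_add \<Rightarrow> 'm2)
    \<Rightarrow> nat set" where
  "S_set act1 act2 = {l. 1 \<le> l \<and> l \<le> min (loewy_length act1) (loewy_length act2) \<and>
     (\<exists>psi. quot_iso act1 act2 (rad_pow act1 l) (soc_ser act2 l) psi)}"

definition alpha :: "('a::ring_1 \<Rightarrow> 'm1::ab_group_add \<Rightarrow> 'm1) \<Rightarrow> (nat \<Rightarrow> 'm1 set \<Rightarrow> 'm2)
    \<Rightarrow> nat \<Rightarrow> 'm1 \<Rightarrow> 'm2" where
  "alpha act1 phi l x = phi l (coset x (rad_pow act1 l))"

end

theory Submission
  imports Defs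
begin

definition pev :: "('k::field \<Rightarrow> 'b::ab_group_add \<Rightarrow> 'b) \<Rightarrow> ('b \<Rightarrow> 'b) \<Rightarrow> 'k poly \<Rightarrow> 'b \<Rightarrow> 'b" where
  "pev sc T p v = (\<Sum>k<Suc (degree p). sc (coeff p k) ((T ^^ k) v))"

context vector_space begin

lemma dim_psub:
  assumes "subspace P" "subspace Q" "P \<subset> Q" "finite W" "Q \<subseteq> span W"
  shows "dim P < dim Q"
proof -
  obtain B where B: "B \<subseteq> Q" "independent B" "Q \<subseteq> span B" "card B = dim Q" using basis_exists .
  obtain C where C: "C \<subseteq> P" "independent C" "P \<subseteq> span C" "card C = dim P" using basis_exists .
  from assms obtain q where q: "q \<in> Q" "q \<notin> P" by auto
  have spC: "span C = P" using C assms(1) span_minimal by blast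
  have "q \<notin> span C" using q spC by simp
  hence ind: "independent (insert q C)" using C(2) by (rule independent_insertI)
  have finB: "finite B" using independent_span_bound[OF assms(4) B(2)] B(1) assms(5) by auto
  have "insert q C \<subseteq> span B" using B q C assms(3) by auto
  from independent_span_bound[OF finB ind this] have "finite (insert q C)" "card (insert q C) \<le> card B" by auto
  moreover have "q \<notin> C" using q C by auto
  ultimately show ?thesis using B C by simp
qed


lemma pev_ext: "degree (p::'a poly) < N \<Longrightarrow> pev scale T p v = (\<Sum>k<N. coeff p k *s (T^^k) v)"
  unfolding pev_def
  by (rule sum.mono_neutral_left) (auto simp: coeff_eq_0)

context
  fixes V T
  assumes subV: "subspace V" and TV: "\<forall>v\<in>V. T v \<in> V"
    and Tadd: "\<forall>x\<in>V. \<forall>y\<in>V. T (x + y) = T x + T y"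
    and Tsc: "\<forall>c. \<forall>x\<in>V. T (c *s x) = c *s T x"
begin

lemma iter_in: "v \<in> V \<Longrightarrow> (T^^k) v \<in> V"
  by (induction k) (auto simp: TV)

lemma sum_in: "(\<And>i. i \<in> A \<Longrightarrow> f i \<in> V) \<Longrightarrow> sum f A \<in> V"
proof -
  assume a: "\<And>i. i \<in> A \<Longrightarrow> f i \<in> V"
  have e: "span V = V" using subV span_eq_iff by blast
  have "sum f A \<in> span V" using a e by (intro span_sum span_base) auto
  thus ?thesis using e by simp
qed

lemma T0: "T 0 = 0"
proof -
  have "0 \<in> V" using subV by (simp add: subspace_def)
  hence "T (0 + 0) = T 0 + T 0" using Tadd by blast
  thus ?thesis by simp
qed

lemma Tsum: "finite A \<Longrightarrow> (\<And>i. i \<in> A \<Longrightarrow> f i \<in> V) \<Longrightarrow> T (\<Sum>i\<in>A. f i) = (\<Sum>i\<in>A. T (f i))"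
proof (induction A rule: finite_induct)
  case empty then show ?case by (simp add: T0)
next
  case (insert x F)
  have "sum f F \<in> V" using insert by (intro sum_in) auto
  then show ?case using insert Tadd by simp
qed

lemma pev_in: "v \<in> V \<Longrightarrow> pev scale T p v \<in> V"
  unfolding pev_def using subV iter_in
  by (intro sum_in) (auto simp: subspace_def)

lemma pev_lin:
  assumes v: "v \<in> V"
  shows "pev scale T ([:-a,1:] * q) v = T (pev scale T q v) - a *s pev scale T q v"
proof -
  define N where "N = Suc (degree q)"
  have dl: "degree ([:-a,1:] * q) < Suc N"
    unfolding N_def using degree_mult_le[of "[:-a,1:]" q] by simp
  have e: "[:-a,1:] * q = smult (-a) q + pCons 0 q" by simp
  have "pev scale T ([:-a,1:] * q) v = (\<Sum>k<Suc N. coeff ([:-a,1:] * q) k *s (T^^k) v)"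
    by (rule pev_ext[OF dl])
  also have "\<dots> = (\<Sum>k<Suc N. (-a * coeff q k) *s (T^^k) v) + (\<Sum>k<Suc N. coeff (pCons 0 q) k *s (T^^k) v)"
    unfolding e coeff_add coeff_smult scale_left_distrib sum.distrib by (rule refl)
  also have "(\<Sum>k<Suc N. (-a * coeff q k) *s (T^^k) v) = -a *s pev scale T q v"
  proof -
    have "pev scale T q v = (\<Sum>k<Suc N. coeff q k *s (T^^k) v)" by (rule pev_ext) (simp add: N_def)
    then show ?thesis by (simp only: scale_sum_right scale_scale)
  qed
  also have "(\<Sum>k<Suc N. coeff (pCons 0 q) k *s (T^^k) v) = (\<Sum>k<N. coeff q k *s (T^^(Suc k)) v)"
    by (subst sum.lessThan_Suc_shift) simp
  also have "\<dots> = (\<Sum>k<N. T (coeff q k *s (T^^k) v))"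
    using Tsc iter_in[OF v] by simp
  also have "\<dots> = T (\<Sum>k<N. coeff q k *s (T^^k) v)"
    using iter_in[OF v] subV by (subst Tsum) (auto simp: subspace_def)
  also have "(\<Sum>k<N. coeff q k *s (T^^k) v) = pev scale T q v" by (simp add: pev_def N_def)
  finally show ?thesis by (simp add: scale_minus_left)
qed

lemma root_eigen:
  assumes alg: "alg_closed_field TYPE('a)"
  shows "p \<noteq> 0 \<Longrightarrow> v \<in> V \<Longrightarrow> v \<noteq> 0 \<Longrightarrow> pev scale T p v = 0 \<Longrightarrow> \<exists>c u. u \<in> V \<and> u \<noteq> 0 \<and> T u = c *s u"
proof (induction "degree p" arbitrary: p rule: less_induct)
  case less
  show ?case
  proof (cases "degree p = 0")
    case True
    then obtain c where "p = [:c:]" by (metis degree_eq_zeroE)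
    then have "pev scale T p v = c *s v" "c \<noteq> 0" using less by (auto simp: pev_def)
    then show ?thesis using less by simp
  next
    case False
    then obtain a where "poly p a = 0" using alg unfolding alg_closed_field_def by blast
    then obtain q where q: "p = [:-a,1:] * q" by (auto simp: poly_eq_0_iff_dvd elim: dvdE)
    have qn: "q \<noteq> 0" using q less by auto
    have "degree p = degree [:-a,1:] + degree q" unfolding q by (rule degree_mult_eq) (simp_all add: qn)
    then have dq: "degree q < degree p" by simp
    have ev: "T (pev scale T q v) - a *s pev scale T q v = 0" using pev_lin[OF less(3)] q less by simp
    show ?thesis
    proof (cases "pev scale T q v = 0")
      case True
      then show ?thesis using less(1)[OF dq qn less(3) less(4)] by blast
    next
      case False
      then show ?thesis using ev pev_in[OF less(3)] by (intro exI[of _ a] exI[of _ "pev scale T q v"]) simp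
    qed
  qed
qed


lemma exists_p:
  assumes W: "finite W" "V \<subseteq> span W" and w: "w \<in> V"
  shows "\<exists>p. p \<noteq> 0 \<and> pev scale T p w = 0"
proof -
  define D where "D = card W"
  define it where "it k = (T^^k) w" for k
  have ifs: "(if b then 1 else 0) *s x = (if b then x else 0)" for b x by simp
  show ?thesis
  proof (cases "inj_on it {..D}")
    case False
    then obtain i j where "i \<noteq> j" "it i = it j" unfolding inj_on_def by auto
    then obtain i j where ij: "i < j" "it i = it j" by (metis linorder_neqE_nat)
    define p where "p = monom (1::'a) j - monom 1 i"
    have cp: "coeff p k = (if k = j then 1 else 0) - (if k = i then 1 else 0)" for k
      by (simp add: p_def coeff_monom)
    have pn: "p \<noteq> 0"
    proof
      assume "p = 0" then have "coeff p j = 0" by simp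
      with cp ij show False by simp
    qed
    have "degree p \<le> j" by (rule degree_le) (use ij in \<open>auto simp: cp\<close>)
    then have "pev scale T p w = (\<Sum>k<Suc j. coeff p k *s it k)"
      unfolding it_def by (intro pev_ext) simp
    also have "\<dots> = (\<Sum>k<Suc j. (if k = j then it k else 0)) - (\<Sum>k<Suc j. (if k = i then it k else 0))"
      unfolding cp scale_left_diff_distrib sum_subtractf ifs by (rule refl)
    also have "\<dots> = 0" using ij by (simp add: sum.delta)
    finally show ?thesis using pn by blast
  next
    case True
    let ?S = "it ` {..D}"
    have cS: "card ?S = Suc D" using True by (simp add: card_image)
    have sub: "?S \<subseteq> span W" using W w iter_in unfolding it_def by auto
    have "dependent ?S"
    proof (rule ccontr)
      assume "independent ?S"
      from independent_span_bound[OF W(1) this sub] have "card ?S \<le> card W" by simp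
      with cS D_def show False by simp
    qed
    then obtain u where u: "\<exists>v\<in>?S. u v \<noteq> 0" "(\<Sum>v\<in>?S. u v *s v) = 0"
      using dependent_finite[of ?S] by auto
    define p where "p = (\<Sum>k\<le>D. monom (u (it k)) k)"
    have cp: "coeff p k = (if k \<le> D then u (it k) else 0)" for k
    proof -
      have "coeff p k = (\<Sum>k'\<le>D. if k' = k then u (it k') else 0)"
        by (simp add: p_def coeff_sum coeff_monom eq_commute)
      also have "\<dots> = (if k \<le> D then u (it k) else 0)" by (simp add: sum.delta)
      finally show ?thesis .
    qed
    from u(1) obtain k0 where k0: "k0 \<le> D" "u (it k0) \<noteq> 0" by auto
    have pn: "p \<noteq> 0"
    proof
      assume "p = 0" then have "coeff p k0 = 0" by simp
      with cp k0 show False by simp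
    qed
    have "degree p \<le> D" by (rule degree_le) (auto simp: cp)
    then have "pev scale T p w = (\<Sum>k<Suc D. coeff p k *s it k)"
      unfolding it_def by (intro pev_ext) simp
    also have "\<dots> = (\<Sum>k\<le>D. u (it k) *s it k)"
      by (simp add: cp lessThan_Suc_atMost)
    also have "\<dots> = (\<Sum>v\<in>?S. u v *s v)"
      by (simp add: sum.reindex[OF True])
    also have "\<dots> = 0" by (rule u(2))
    finally show ?thesis using pn by blast
  qed
qed

lemma eigen:
  assumes "alg_closed_field TYPE('a)" "finite W" "V \<subseteq> span W" "w \<in> V" "w \<noteq> 0"
  shows "\<exists>c u. u \<in> V \<and> u \<noteq> 0 \<and> T u = c *s u"
proof -
  obtain p where "p \<noteq> 0" "pev scale T p w = 0" using exists_p assms by blast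
  then show ?thesis using root_eigen assms by blast
qed

end
end

locale fda =
  fixes scal :: "'k::field \<Rightarrow> 'a::ring_1 \<Rightarrow> 'a"
  assumes fd: "fd_algebra scal"
begin

lemma sc_add: "scal c (x + y) = scal c x + scal c y" using fd unfolding fd_algebra_def by blast
lemma sc_addl: "scal (c + d) x = scal c x + scal d x" using fd unfolding fd_algebra_def by blast
lemma sc_mult: "scal (c * d) x = scal c (scal d x)" using fd unfolding fd_algebra_def by blast
lemma sc_one: "scal 1 x = x" using fd unfolding fd_algebra_def by blast
lemma sc_ml: "scal c (x * y) = scal c x * y" using fd unfolding fd_algebra_def by blast
lemma sc_mr: "scal c (x * y) = x * scal c y" using fd unfolding fd_algebra_def by blast

lemma sc_left: "scal c x = scal c 1 * x" using sc_ml[of c 1 x] by simp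
lemma sc_right: "scal c x = x * scal c 1" using sc_mr[of c x 1] by simp
lemma sc_central: "scal c 1 * x = x * scal c 1" using sc_left sc_right by metis

sublocale L: vector_space scal
  by unfold_locales (auto simp: sc_add sc_addl sc_mult sc_one)

lemma fin_span: "\<exists>B. finite B \<and> L.span B = UNIV"
proof -
  obtain B where B: "finite B" "\<forall>x. \<exists>f. x = (\<Sum>b\<in>B. scal (f b) b)"
    using fd unfolding fd_algebra_def by blast
  have "x \<in> L.span B" for x
  proof -
    obtain f where "x = (\<Sum>b\<in>B. scal (f b) b)" using B by blast
    then show ?thesis using \<open>finite B\<close> by simp (rule L.span_sum, rule L.span_scale, rule L.span_base)
  qed
  then show ?thesis using B by blast
qed

lemma left_ideal_subspace: "left_ideal I \<Longrightarrow> L.subspace I"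
  unfolding L.subspace_def
proof (intro conjI ballI allI)
  assume I: "left_ideal I"
  show "0 \<in> I" using I unfolding left_ideal_def by blast
  fix x assume x: "x \<in> I"
  { fix y assume "y \<in> I" then show "x + y \<in> I" using I x unfolding left_ideal_def by blast }
  fix c have "scal c 1 * x \<in> I" using I x unfolding left_ideal_def by blast
  then show "scal c x \<in> I" by (subst sc_left)
qed

lemma Inter_left_ideal: "(\<forall>m\<in>F. left_ideal m) \<Longrightarrow> left_ideal (\<Inter>F)"
  unfolding left_ideal_def by auto

lemma max_left: "maximal_left_ideal m \<Longrightarrow> left_ideal m"
  unfolding maximal_left_ideal_def by blast

lemma jac_sub: "maximal_left_ideal (m::'a set) \<Longrightarrow> jacobson \<subseteq> m"
  unfolding jacobson_def by blast

lemma max_family: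
  "\<exists>F::'a set set. finite F \<and> (\<forall>m\<in>F. maximal_left_ideal m) \<and> \<Inter>F = jacobson \<and> (\<forall>m\<in>F. \<not> \<Inter>(F - {m}) \<subseteq> m)"
proof -
  obtain B where B: "finite B" "L.span B = UNIV" using fin_span by blast
  let ?P = "\<lambda>F::'a set set. finite F \<and> (\<forall>m\<in>F. maximal_left_ideal m)"
  have "?P {}" by simp
  from ex_has_least_nat[of ?P "{}" "\<lambda>F. L.dim (\<Inter>F)"]
  obtain F0 where F0: "?P F0" "\<And>G. ?P G \<Longrightarrow> L.dim (\<Inter>F0) \<le> L.dim (\<Inter>G)" by blast
  have F0li: "left_ideal (\<Inter>F0)" using F0(1) by (intro Inter_left_ideal) (auto dest: max_left)
  have "\<Inter>F0 \<subseteq> m" if m: "maximal_left_ideal m" for m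
  proof (rule ccontr)
    assume nm: "\<not> \<Inter>F0 \<subseteq> m"
    let ?G = "insert m F0"
    have "?P ?G" using F0(1) m by simp
    have "left_ideal (\<Inter>?G)" using F0(1) m by (intro Inter_left_ideal) (auto dest: max_left)
    moreover have "\<Inter>?G \<subset> \<Inter>F0" using nm by auto
    ultimately have "L.dim (\<Inter>?G) < L.dim (\<Inter>F0)"
      using F0li B by (intro L.dim_psub[of _ _ B]) (auto simp: left_ideal_subspace)
    with F0(2)[OF \<open>?P ?G\<close>] show False by simp
  qed
  then have "\<Inter>F0 \<subseteq> jacobson" unfolding jacobson_def by (intro Inter_greatest) simp
  moreover have "jacobson \<subseteq> \<Inter>F0" 
  proof (intro Inter_greatest)
    fix X assume "X \<in> F0" then show "jacobson \<subseteq> X" using F0(1) by (intro jac_sub) simp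
  qed
  ultimately have eq0: "\<Inter>F0 = jacobson" by blast
  let ?Q = "\<lambda>F::'a set set. ?P F \<and> \<Inter>F = jacobson"
  have q0: "?Q F0" using F0(1) eq0 by simp
  have "\<exists>F. ?Q F \<and> (\<forall>G. ?Q G \<longrightarrow> card F \<le> card G)"
    using ex_has_least_nat[of ?Q F0 card, OF q0] .
  then obtain F where F: "?Q F" and Fm: "\<forall>G. ?Q G \<longrightarrow> card F \<le> card G" by blast
  have "\<not> \<Inter>(F - {m}) \<subseteq> m" if m: "m \<in> F" for m
  proof
    assume "\<Inter>(F - {m}) \<subseteq> m"
    then have "\<Inter>(F - {m}) = \<Inter>F" using m by auto
    then have "?Q (F - {m})" using F by simp
    from Fm[rule_format, OF this] have "card F \<le> card (F - {m})" .
    moreover have "card (F - {m}) < card F" using m F by (intro card_Diff1_less) simp_all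
    ultimately show False by simp
  qed
  then show ?thesis using F by (intro exI[of _ F]) simp
qed

lemma idem_elem:
  assumes m: "maximal_left_ideal (m::'a set)" and C: "left_ideal C" and nC: "\<not> C \<subseteq> m"
  shows "\<exists>e. e \<in> C \<and> 1 - e \<in> m"
proof -
  from nC obtain t where t: "t \<in> C" "t \<notin> m" by auto
  define K where "K = {x. \<exists>u\<in>m. \<exists>r. x = u + r * t}"
  have mli: "left_ideal m" using m by (rule max_left)
  have m0: "0 \<in> m" and madd: "\<And>x y. x \<in> m \<Longrightarrow> y \<in> m \<Longrightarrow> x + y \<in> m"
    and mneg: "\<And>x. x \<in> m \<Longrightarrow> - x \<in> m" and mmul: "\<And>r x. x \<in> m \<Longrightarrow> r * x \<in> m"
    using mli unfolding left_ideal_def by blast+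
  have Kli: "left_ideal K"
    unfolding left_ideal_def
  proof (intro conjI ballI allI)
    have "0 = 0 + 0 * t" by simp
    then show "0 \<in> K" unfolding K_def using m0 by blast
  next
    fix x y assume "x \<in> K" "y \<in> K"
    then obtain u1 r1 u2 r2 where "x = u1 + r1 * t" "y = u2 + r2 * t" "u1 \<in> m" "u2 \<in> m"
      unfolding K_def by blast
    moreover have "x + y = (u1 + u2) + (r1 + r2) * t" using calculation by (simp add: algebra_simps)
    ultimately show "x + y \<in> K" unfolding K_def using madd by blast
  next
    fix x assume "x \<in> K"
    then obtain u1 r1 where "x = u1 + r1 * t" "u1 \<in> m" unfolding K_def by blast
    moreover have "- x = (- u1) + (- r1) * t" using calculation by (simp add: algebra_simps)
    ultimately show "- x \<in> K" unfolding K_def using mneg by blast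
  next
    fix x r assume "x \<in> K"
    then obtain u1 r1 where "x = u1 + r1 * t" "u1 \<in> m" unfolding K_def by blast
    moreover have "r * x = (r * u1) + (r * r1) * t" using calculation by (simp add: algebra_simps)
    ultimately show "r * x \<in> K" unfolding K_def using mmul by blast
  qed
  have "m \<subseteq> K"
  proof
    fix x assume "x \<in> m"
    moreover have "x = x + 0 * t" by simp
    ultimately show "x \<in> K" unfolding K_def by blast
  qed
  moreover have "t \<in> K"
  proof -
    have "t = 0 + 1 * t" by simp
    then show ?thesis unfolding K_def using m0 by blast
  qed
  moreover have "K \<noteq> m" using \<open>t \<in> K\<close> t by blast
  ultimately have "K = UNIV" using m Kli unfolding maximal_left_ideal_def by blast
  then obtain u r where ur: "1 = u + r * t" "u \<in> m" unfolding K_def by blast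
  have "r * t \<in> C" using C t unfolding left_ideal_def by blast
  moreover have "1 - r * t \<in> m" using ur by (metis add_diff_cancel_right')
  ultimately show ?thesis by blast
qed

end

lemma chain_rank:
  fixes A :: "'x set set"
  assumes fin: "finite A" and ch: "\<And>P Q. P \<in> A \<Longrightarrow> Q \<in> A \<Longrightarrow> P \<subseteq> Q \<or> Q \<subseteq> P"
  shows "bij_betw (\<lambda>P. card {Q\<in>A. Q \<subset> P}) A {..<card A}"
    and "\<And>P Q. P \<in> A \<Longrightarrow> Q \<in> A \<Longrightarrow> P \<subset> Q \<Longrightarrow> card {R\<in>A. R \<subset> P} < card {R\<in>A. R \<subset> Q}"
proof -
  show lt: "card {R\<in>A. R \<subset> P} < card {R\<in>A. R \<subset> Q}" if "P \<in> A" "Q \<in> A" "P \<subset> Q" for P Q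
  proof -
    have "{R\<in>A. R \<subset> P} \<subset> {R\<in>A. R \<subset> Q}" using that by auto
    then show ?thesis using fin by (intro psubset_card_mono) auto
  qed
  define r where "r P = card {Q\<in>A. Q \<subset> P}" for P
  have inj: "inj_on r A"
  proof (rule inj_onI)
    fix P Q assume PQ: "P \<in> A" "Q \<in> A" "r P = r Q"
    show "P = Q"
    proof (rule ccontr)
      assume "P \<noteq> Q"
      then have "P \<subset> Q \<or> Q \<subset> P" using ch[OF PQ(1,2)] by auto
      then show False using lt PQ unfolding r_def by fastforce
    qed
  qed
  have img: "r ` A \<subseteq> {..<card A}"
  proof
    fix x assume "x \<in> r ` A"
    then obtain P where P: "P \<in> A" "x = r P" by auto
    have "{Q\<in>A. Q \<subset> P} \<subset> A" using P by auto
    then have "card {Q\<in>A. Q \<subset> P} < card A" using fin by (intro psubset_card_mono) auto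
    then show "x \<in> {..<card A}" using P by (simp add: r_def)
  qed
  have "card (r ` A) = card {..<card A}" using card_image[OF inj] by simp
  then have "r ` A = {..<card A}" using img by (intro card_subset_eq) auto
  then show "bij_betw (\<lambda>P. card {Q\<in>A. Q \<subset> P}) A {..<card A}"
    using inj unfolding bij_betw_def r_def by simp
qed

locale umod = fda scal for scal :: "'k::field \<Rightarrow> 'a::ring_1 \<Rightarrow> 'a" +
  fixes act :: "'a \<Rightarrow> 'm::ab_group_add \<Rightarrow> 'm"
  assumes md: "is_module act" and us: "uniserial act" and nz: "(UNIV::'m set) \<noteq> {0}"
begin

lemma act_add: "act a (x + y) = act a x + act a y" using md unfolding is_module_def by blast
lemma act_addl: "act (a + b) x = act a x + act b x" using md unfolding is_module_def by blast
lemma act_mult: "act (a * b) x = act a (act b x)" using md unfolding is_module_def by blast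
lemma act_one[simp]: "act 1 x = x" using md unfolding is_module_def by blast

lemma act_zero[simp]: "act a 0 = 0"
  using act_add[of a 0 0] by simp
lemma act_zerol[simp]: "act 0 x = 0"
  using act_addl[of 0 0 x] by simp
lemma act_neg: "act a (- x) = - act a x"
  using act_add[of a x "-x"] by (metis act_zero add.right_inverse minus_unique)
lemma act_negl: "act (- a) x = - act a x"
  using act_addl[of a "-a" x] by (metis act_zerol add.right_inverse minus_unique)
lemma act_diff: "act a (x - y) = act a x - act a y"
  using act_add[of a x "-y"] act_neg by simp
lemma act_diffl: "act (a - b) x = act a x - act b x"
  using act_addl[of a "-b" x] act_negl by simp

lemma act_sum: "act (sum f A) x = (\<Sum>i\<in>A. act (f i) x)"
  by (induction A rule: infinite_finite_induct) (auto simp: act_addl)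
lemma act_sumr: "act a (sum f A) = (\<Sum>i\<in>A. act a (f i))"
  by (induction A rule: infinite_finite_induct) (auto simp: act_add)

abbreviation sm :: "'k \<Rightarrow> 'm \<Rightarrow> 'm" where "sm \<equiv> smul scal act"

lemma sm_def: "sm c x = act (scal c 1) x" by (simp add: smul_def)

sublocale V: vector_space sm
proof unfold_locales
  fix a b :: 'k and x y :: 'm
  show "sm a (x + y) = sm a x + sm a y" by (simp add: sm_def act_add)
  show "sm (a + b) x = sm a x + sm b x" by (simp add: sm_def act_addl sc_addl)
  have "scal a 1 * scal b 1 = scal (a*b) 1" by (simp only: sc_left[of a "scal b 1", symmetric] sc_mult)
  then show "sm a (sm b x) = sm (a * b) x" by (simp add: sm_def act_mult[symmetric])
  show "sm 1 x = x" by (simp add: sm_def sc_one)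
qed

lemma act_sm: "act a (sm c x) = sm c (act a x)"
  by (simp add: sm_def act_mult[symmetric] sc_central)

lemma act_scal: "act (scal c a) x = sm c (act a x)"
  by (simp add: sm_def act_mult[symmetric] sc_left[symmetric])

lemma submod0: "submod act P \<Longrightarrow> 0 \<in> P" unfolding submod_def by blast
lemma submod_add: "submod act P \<Longrightarrow> x \<in> P \<Longrightarrow> y \<in> P \<Longrightarrow> x + y \<in> P" unfolding submod_def by blast
lemma submod_act: "submod act P \<Longrightarrow> x \<in> P \<Longrightarrow> act a x \<in> P" unfolding submod_def by blast
lemma submod_neg: "submod act P \<Longrightarrow> x \<in> P \<Longrightarrow> - x \<in> P"
  using submod_act[of P x "-1"] by (simp add: act_negl)
lemma submod_diff: "submod act P \<Longrightarrow> x \<in> P \<Longrightarrow> y \<in> P \<Longrightarrow> x - y \<in> P"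
  using submod_add[of P x "-y"] submod_neg by simp
lemma submod_sm: "submod act P \<Longrightarrow> x \<in> P \<Longrightarrow> sm c x \<in> P"
  by (simp add: sm_def submod_act)
lemma submod_sum: "submod act P \<Longrightarrow> (\<And>i. i \<in> A \<Longrightarrow> f i \<in> P) \<Longrightarrow> sum f A \<in> P"
  by (induction A rule: infinite_finite_induct) (auto simp: submod0 submod_add)
lemma submod_subspace: "submod act P \<Longrightarrow> V.subspace P"
  unfolding V.subspace_def by (auto simp: submod0 submod_add submod_sm)
lemma submod_UNIV: "submod act UNIV" unfolding submod_def by simp
lemma submod_zero: "submod act {0}" unfolding submod_def by simp

lemma submod_sm_cancel: "submod act P \<Longrightarrow> c \<noteq> 0 \<Longrightarrow> sm c x \<in> P \<Longrightarrow> x \<in> P"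
  using submod_sm[of P "sm c x" "inverse c"] by simp

lemma gen_submod_submod: "submod act (gen_submod act X)"
  unfolding gen_submod_def submod_def by auto
lemma gen_submod_sup: "X \<subseteq> gen_submod act X"
  unfolding gen_submod_def by auto
lemma gen_submod_least: "submod act P \<Longrightarrow> X \<subseteq> P \<Longrightarrow> gen_submod act X \<subseteq> P"
  unfolding gen_submod_def by auto
lemma gen_submod_id: "submod act P \<Longrightarrow> gen_submod act P = P"
  using gen_submod_least gen_submod_sup by blast

lemma ideal_sumset:
  assumes K: "left_ideal K" and Q: "submod act Q"
  shows "submod act {y. \<exists>r\<in>K. \<exists>z\<in>Q. y = act r x + z}"
  unfolding submod_def
proof (intro conjI ballI allI)
  have "0 \<in> K" "0 \<in> Q" using K Q unfolding left_ideal_def by (auto simp: submod0)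
  then show "0 \<in> {y. \<exists>r\<in>K. \<exists>z\<in>Q. y = act r x + z}" by force
next
  fix y1 y2 assume "y1 \<in> {y. \<exists>r\<in>K. \<exists>z\<in>Q. y = act r x + z}" "y2 \<in> {y. \<exists>r\<in>K. \<exists>z\<in>Q. y = act r x + z}"
  then obtain r1 z1 r2 z2 where h: "r1 \<in> K" "z1 \<in> Q" "y1 = act r1 x + z1" "r2 \<in> K" "z2 \<in> Q" "y2 = act r2 x + z2"
    by blast
  have "y1 + y2 = act (r1 + r2) x + (z1 + z2)" using h by (simp add: act_addl algebra_simps)
  moreover have "r1 + r2 \<in> K" using K h unfolding left_ideal_def by blast
  moreover have "z1 + z2 \<in> Q" using Q h by (simp add: submod_add)
  ultimately show "y1 + y2 \<in> {y. \<exists>r\<in>K. \<exists>z\<in>Q. y = act r x + z}" by blast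
next
  fix a y1 assume "y1 \<in> {y. \<exists>r\<in>K. \<exists>z\<in>Q. y = act r x + z}"
  then obtain r1 z1 where h: "r1 \<in> K" "z1 \<in> Q" "y1 = act r1 x + z1" by blast
  have "act a y1 = act (a * r1) x + act a z1" using h by (simp add: act_add act_mult)
  moreover have "a * r1 \<in> K" using K h unfolding left_ideal_def by blast
  moreover have "act a z1 \<in> Q" using Q h by (simp add: submod_act)
  ultimately show "act a y1 \<in> {y. \<exists>r\<in>K. \<exists>z\<in>Q. y = act r x + z}" by blast
qed

lemma ann_ideal:
  assumes Q: "submod act Q"
  shows "left_ideal {b. act b y \<in> Q}"
  unfolding left_ideal_def
proof (intro conjI ballI allI)
  show "0 \<in> {b. act b y \<in> Q}" using Q by (simp add: submod0)
  fix x assume x: "x \<in> {b. act b y \<in> Q}"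
  { fix z assume "z \<in> {b. act b y \<in> Q}"
    then show "x + z \<in> {b. act b y \<in> Q}" using x Q by (simp add: act_addl submod_add) }
  show "- x \<in> {b. act b y \<in> Q}" using x Q by (simp add: act_negl submod_neg)
  fix r show "r * x \<in> {b. act b y \<in> Q}" using x Q by (simp add: act_mult submod_act)
qed

lemma left_ideal_UNIV: "left_ideal (UNIV::'a set)" unfolding left_ideal_def by simp

definition cyc :: "'m \<Rightarrow> 'm set" where "cyc x = range (\<lambda>a. act a x)"

lemma cyc_submod: "submod act (cyc x)"
  unfolding cyc_def submod_def
proof (intro conjI ballI allI)
  show "0 \<in> range (\<lambda>a. act a x)" by (metis act_zerol rangeI)
  fix y assume "y \<in> range (\<lambda>a. act a x)"
  then obtain a where a: "y = act a x" by blast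
  { fix z assume "z \<in> range (\<lambda>a. act a x)"
    then obtain b where "z = act b x" by blast
    then show "y + z \<in> range (\<lambda>a. act a x)" using a by (metis act_addl rangeI) }
  fix r show "act r y \<in> range (\<lambda>a. act a x)" using a by (metis act_mult rangeI)
qed

lemma cyc_self: "x \<in> cyc x"
  unfolding cyc_def by (metis act_one rangeI)

lemma cyc_span:
  assumes B: "L.span B = UNIV"
  shows "cyc x = V.span ((\<lambda>b. act b x) ` B)"
proof
  let ?P = "{a. act a x \<in> V.span ((\<lambda>b. act b x) ` B)}"
  have "L.subspace ?P"
    unfolding L.subspace_def
    by (auto simp: act_addl act_scal V.span_zero V.span_add V.span_scale)
  moreover have "B \<subseteq> ?P" by (auto intro: V.span_base)
  ultimately have "L.span B \<subseteq> ?P" by (rule L.span_minimal[rotated])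
  then show "cyc x \<subseteq> V.span ((\<lambda>b. act b x) ` B)" using B unfolding cyc_def by auto
next
  show "V.span ((\<lambda>b. act b x) ` B) \<subseteq> cyc x"
    by (rule V.span_minimal) (auto simp: cyc_def submod_subspace[OF cyc_submod[unfolded cyc_def]])
qed

lemma mod_fin_span: "\<exists>W. finite W \<and> V.span W = UNIV"
proof -
  obtain B where B: "finite B" "L.span B = UNIV" using fin_span by blast
  have dle: "V.dim (cyc x) \<le> card B" for x
  proof -
    have "V.dim (cyc x) \<le> card ((\<lambda>b. act b x) ` B)"
      using B by (intro V.dim_le_card) (auto simp: cyc_span[OF B(2)])
    also have "\<dots> \<le> card B" by (rule card_image_le[OF B(1)])
    finally show ?thesis .
  qed
  let ?D = "range (\<lambda>x. V.dim (cyc x))"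
  have "?D \<subseteq> {..card B}" using dle by auto
  then have finD: "finite ?D" by (rule finite_subset) simp
  have "Max ?D \<in> ?D" by (rule Max_in[OF finD]) simp
  then obtain x0 where x0: "V.dim (cyc x0) = Max ?D" by (metis (no_types, lifting) imageE)
  have "y \<in> cyc x0" for y
  proof (rule ccontr)
    assume ny: "y \<notin> cyc x0"
    have "cyc y \<subseteq> cyc x0 \<or> cyc x0 \<subseteq> cyc y" using us cyc_submod[of y] cyc_submod[of x0] unfolding uniserial_def by blast
    then have "cyc x0 \<subset> cyc y" using ny cyc_self[of y] by blast
    then have "V.dim (cyc x0) < V.dim (cyc y)"
      using B by (intro V.dim_psub[of _ _ "(\<lambda>b. act b y) ` B"])
        (auto simp: submod_subspace cyc_submod cyc_span[OF B(2)])
    moreover have "V.dim (cyc y) \<le> Max ?D" using finD by (intro Max_ge) simp_all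
    ultimately show False using x0 by simp
  qed
  then have "V.span ((\<lambda>b. act b x0) ` B) = UNIV" using cyc_span[OF B(2)] by auto
  then show ?thesis using B by blast
qed

definition W0 where "W0 = (SOME W. finite W \<and> V.span W = UNIV)"
lemma W0: "finite W0" "V.span W0 = UNIV"
  using someI_ex[OF mod_fin_span] unfolding W0_def by auto

lemma dim_strict: "submod act P \<Longrightarrow> submod act Q \<Longrightarrow> P \<subset> Q \<Longrightarrow> V.dim P < V.dim Q"
  using W0 by (intro V.dim_psub[of _ _ W0]) (auto simp: submod_subspace)

end

context umod begin

definition SM where "SM = {P. submod act P}"

lemma SM_chain: "P \<in> SM \<Longrightarrow> Q \<in> SM \<Longrightarrow> P \<subseteq> Q \<or> Q \<subseteq> P"
  using us unfolding SM_def uniserial_def by blast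

lemma SM_fin: "finite SM"
proof -
  have inj: "inj_on V.dim SM"
  proof (rule inj_onI)
    fix P Q assume PQ: "P \<in> SM" "Q \<in> SM" "V.dim P = V.dim Q"
    show "P = Q"
    proof (rule ccontr)
      assume "P \<noteq> Q"
      then have "P \<subset> Q \<or> Q \<subset> P" using SM_chain[OF PQ(1,2)] by blast
      then show False using dim_strict PQ unfolding SM_def by fastforce
    qed
  qed
  have "V.dim ` SM \<subseteq> {..card W0}"
  proof
    fix d assume "d \<in> V.dim ` SM"
    then obtain P where "d = V.dim P" by blast
    moreover have "V.dim P \<le> card W0" using W0 by (intro V.dim_le_card) auto
    ultimately show "d \<in> {..card W0}" by simp
  qed
  then have "finite (V.dim ` SM)" by (rule finite_subset) simp
  then show ?thesis using inj by (rule finite_imageD)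
qed

definition rk where "rk P = card {Q\<in>SM. Q \<subset> P}"
definition nn where "nn = card SM - 1"
definition N where "N i = inv_into SM rk i"

lemma rk_bij: "bij_betw rk SM {..<card SM}"
  unfolding rk_def[abs_def] using chain_rank(1)[OF SM_fin SM_chain] .

lemma rk_lt: "P \<in> SM \<Longrightarrow> Q \<in> SM \<Longrightarrow> P \<subset> Q \<Longrightarrow> rk P < rk Q"
  unfolding rk_def using chain_rank(2)[OF SM_fin SM_chain] .

lemma SM_0: "{0} \<in> SM" and SM_UNIV: "UNIV \<in> SM"
  unfolding SM_def by (auto simp: submod_zero submod_UNIV)

lemma card_SM: "card SM = Suc nn" and nn_pos: "1 \<le> nn"
proof -
  have "{{0::'m}, UNIV} \<subseteq> SM" using SM_0 SM_UNIV by auto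
  then have "card {{0::'m}, UNIV} \<le> card SM" by (rule card_mono[OF SM_fin])
  moreover have "card {{0::'m}, UNIV} = 2" using nz by simp
  ultimately have "2 \<le> card SM" by simp
  then show "card SM = Suc nn" "1 \<le> nn" unfolding nn_def by auto
qed

lemma N_SM: "i \<le> nn \<Longrightarrow> N i \<in> SM"
  unfolding N_def using rk_bij card_SM
  by (metis bij_betw_def inv_into_into lessThan_iff less_Suc_eq_le)

lemma rk_N: "i \<le> nn \<Longrightarrow> rk (N i) = i"
  unfolding N_def using rk_bij card_SM
  by (metis bij_betw_inv_into_right lessThan_iff less_Suc_eq_le)

lemma N_rk: "P \<in> SM \<Longrightarrow> N (rk P) = P"
  unfolding N_def using rk_bij by (metis bij_betw_def inv_into_f_f)

lemma rk_le: "P \<in> SM \<Longrightarrow> rk P \<le> nn"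
proof -
  assume "P \<in> SM"
  then have "rk P \<in> rk ` SM" by (rule imageI)
  then have "rk P \<in> {..<card SM}" using rk_bij unfolding bij_betw_def by simp
  then show ?thesis using card_SM by simp
qed

lemma N_submod: "i \<le> nn \<Longrightarrow> submod act (N i)"
  using N_SM unfolding SM_def by blast

lemma sub_N: "submod act P \<Longrightarrow> \<exists>i\<le>nn. P = N i"
  using N_rk rk_le unfolding SM_def by (metis mem_Collect_eq)

lemma N_strict: "i < j \<Longrightarrow> j \<le> nn \<Longrightarrow> N i \<subset> N j"
proof -
  assume ij: "i < j" "j \<le> nn"
  have SMs: "N i \<in> SM" "N j \<in> SM" using ij N_SM by auto
  show "N i \<subset> N j"
  proof (rule ccontr)
    assume "\<not> N i \<subset> N j"
    then have "N j \<subseteq> N i" using SM_chain[OF SMs] by blast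
    then have "N j = N i \<or> N j \<subset> N i" by blast
    then show False
    proof
      assume "N j = N i" then have "rk (N j) = rk (N i)" by simp
      then show False using ij rk_N by simp
    next
      assume "N j \<subset> N i" then have "rk (N j) < rk (N i)" using rk_lt SMs by blast
      then show False using ij rk_N by simp
    qed
  qed
qed

lemma N_mono: "i \<le> j \<Longrightarrow> j \<le> nn \<Longrightarrow> N i \<subseteq> N j"
  using N_strict by (metis le_eq_less_or_eq order_refl psubset_imp_subset)

lemma N_sub_iff: assumes "i \<le> nn" "j \<le> nn" shows "N i \<subseteq> N j \<longleftrightarrow> i \<le> j"
proof
  assume s: "N i \<subseteq> N j"
  show "i \<le> j"
  proof (rule ccontr)
    assume "\<not> i \<le> j" then have "N j \<subset> N i" using N_strict assms by simp
    then show False using s by blast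
  qed
next
  assume "i \<le> j" then show "N i \<subseteq> N j" using N_mono assms by simp
qed

lemma N_eq_iff: "i \<le> nn \<Longrightarrow> j \<le> nn \<Longrightarrow> N i = N j \<longleftrightarrow> i = j"
  using N_sub_iff by (metis order_antisym order_refl)

lemma N0: "N 0 = {0}"
proof -
  have e: "{Q\<in>SM. Q \<subset> {0}} = {}" unfolding SM_def using submod0 by blast
  have "rk {0} = 0" unfolding rk_def e by simp
  then show ?thesis using N_rk[OF SM_0] by simp
qed

lemma Nn: "N nn = UNIV"
proof -
  have "{Q\<in>SM. Q \<subset> UNIV} = SM - {UNIV}" by blast
  then have "rk UNIV = card SM - 1" unfolding rk_def using SM_UNIV SM_fin by simp
  then show ?thesis using N_rk[OF SM_UNIV] nn_def by simp
qed

lemma above: "submod act P \<Longrightarrow> i < nn \<Longrightarrow> N i \<subset> P \<Longrightarrow> N (Suc i) \<subseteq> P"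
proof -
  assume a: "submod act P" "i < nn" "N i \<subset> P"
  obtain k where k: "k \<le> nn" "P = N k" using sub_N[OF a(1)] by blast
  have "\<not> k \<le> i" using a k N_mono[of k i] by auto
  then show ?thesis using k N_mono[of "Suc i" k] by simp
qed

lemma below: "submod act P \<Longrightarrow> j \<le> nn \<Longrightarrow> P \<subseteq> N j \<Longrightarrow> \<not> P \<subseteq> N (j - 1) \<Longrightarrow> P = N j"
proof -
  assume a: "submod act P" "j \<le> nn" "P \<subseteq> N j" "\<not> P \<subseteq> N (j - 1)"
  obtain k where k: "k \<le> nn" "P = N k" using sub_N[OF a(1)] by blast
  have "k \<le> j" using a k N_sub_iff by simp
  moreover have "\<not> k \<le> j - 1"
  proof
    assume "k \<le> j - 1" then have "N k \<subseteq> N (j - 1)" using a by (intro N_mono) auto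
    then show False using a k by simp
  qed
  ultimately have "k = j" by arith
  then show ?thesis using k by simp
qed

lemma exists_gen: "1 \<le> j \<Longrightarrow> j \<le> nn \<Longrightarrow> \<exists>x. x \<in> N j \<and> x \<notin> N (j - 1)"
  using N_strict[of "j - 1" j] by auto

end

context fda begin
lemma li_sum: "left_ideal I \<Longrightarrow> (\<And>i. i \<in> A \<Longrightarrow> f i \<in> I) \<Longrightarrow> sum f A \<in> I"
  by (induction A rule: infinite_finite_induct) (auto simp: left_ideal_def)
lemma li_diff: "left_ideal I \<Longrightarrow> x \<in> I \<Longrightarrow> y \<in> I \<Longrightarrow> x - y \<in> I"
  unfolding left_ideal_def by (metis diff_conv_add_uminus)
end

context umod begin

lemma top_kill:
  assumes j: "1 \<le> j" "j \<le> nn" and a: "a \<in> jacobson" and x: "x \<in> N j"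
  shows "act a x \<in> N (j - 1)"
proof (cases "x \<in> N (j - 1)")
  case True then show ?thesis using N_submod j by (intro submod_act) auto
next
  case False
  have sj: "submod act (N j)" and sj1: "submod act (N (j - 1))" using N_submod j by auto
  have j1j: "N (j - 1) \<subseteq> N j" using j by (intro N_mono) auto
  define I where "I = {b. act b x \<in> N (j - 1)}"
  have Ili: "left_ideal I" unfolding I_def using sj1 by (rule ann_ideal)
  have "maximal_left_ideal I"
    unfolding maximal_left_ideal_def
  proof (intro conjI allI impI)
    show "left_ideal I" by (rule Ili)
    show "I \<noteq> UNIV"
    proof
      assume "I = UNIV" then have "1 \<in> I" by simp
      then show False using False unfolding I_def by simp
    qed
    fix K assume K: "left_ideal K \<and> I \<subseteq> K \<and> K \<noteq> UNIV"
    show "K = I"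
    proof (rule ccontr)
      assume "K \<noteq> I" then obtain b where b: "b \<in> K" "b \<notin> I" using K by blast
      define P where "P = {y. \<exists>r\<in>K. \<exists>z\<in>N (j - 1). y = act r x + z}"
      have Psub: "submod act P" unfolding P_def using K sj1 by (intro ideal_sumset) auto
      have "P \<subseteq> N j"
      proof
        fix y assume "y \<in> P"
        then obtain r z where rz: "r \<in> K" "z \<in> N (j - 1)" "y = act r x + z" unfolding P_def by blast
        have "act r x \<in> N j" using sj x by (rule submod_act)
        moreover have "z \<in> N j" using rz j1j by blast
        ultimately show "y \<in> N j" using sj rz(3) by (simp add: submod_add)
      qed
      moreover have "\<not> P \<subseteq> N (j - 1)"
      proof
        assume "P \<subseteq> N (j - 1)"
        moreover have "act b x \<in> P" unfolding P_def using b sj1 submod0 by force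
        ultimately show False using b unfolding I_def by auto
      qed
      ultimately have "P = N j" using Psub j by (intro below) auto
      then have "x \<in> P" using x by simp
      then obtain r z where rz: "r \<in> K" "z \<in> N (j - 1)" "x = act r x + z" unfolding P_def by blast
      have "x - act r x = z" using rz(3) by (metis add_diff_cancel_left')
      then have "act (1 - r) x = z" by (simp add: act_diffl)
      then have "1 - r \<in> I" unfolding I_def using rz by simp
      then have "1 - r \<in> K" using K by blast
      then have "(1 - r) + r \<in> K" using rz K unfolding left_ideal_def by blast
      then have one: "1 \<in> K" by simp
      have "s \<in> K" for s using one K unfolding left_ideal_def by (metis mult.right_neutral)
      then show False using K by blast
    qed
  qed
  then have "jacobson \<subseteq> I" by (rule jac_sub)
  then show ?thesis using a unfolding I_def by auto
qed

lemma jac_not_small: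
  assumes j: "2 \<le> j" "j \<le> nn"
  shows "\<exists>a\<in>jacobson. \<exists>x\<in>N j. act a x \<notin> N (j - 2)"
proof (rule ccontr)
  assume "\<not> ?thesis"
  then have H: "\<And>a x. a \<in> jacobson \<Longrightarrow> x \<in> N j \<Longrightarrow> act a x \<in> N (j - 2)" by blast
  have sj: "submod act (N j)" and sj1: "submod act (N (j - 1))" and sj2: "submod act (N (j - 2))"
    using N_submod j by auto
  have j1j: "N (j - 1) \<subseteq> N j" using j by (intro N_mono) auto
  have j21: "N (j - 2) \<subset> N (j - 1)" using j by (intro N_strict) auto
  have "\<exists>x. x \<in> N j \<and> x \<notin> N (j - 1)" using exists_gen j by simp
  then obtain x where x: "x \<in> N j" "x \<notin> N (j - 1)" by blast
  obtain F :: "'a set set" where F: "finite F" "\<forall>m\<in>F. maximal_left_ideal m" "\<Inter>F = jacobson"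
    "\<forall>m\<in>F. \<not> \<Inter>(F - {m}) \<subseteq> m" using max_family by blast
  have "\<forall>m\<in>F. \<exists>e. e \<in> \<Inter>(F - {m}) \<and> 1 - e \<in> m"
  proof
    fix m assume m: "m \<in> F"
    have "left_ideal (\<Inter>(F - {m}))" using F(2) by (intro Inter_left_ideal) (auto intro: max_left)
    then show "\<exists>e. e \<in> \<Inter>(F - {m}) \<and> 1 - e \<in> m" using F m by (intro idem_elem) auto
  qed
  then obtain e where e: "\<And>m. m \<in> F \<Longrightarrow> e m \<in> \<Inter>(F - {m}) \<and> 1 - e m \<in> m" by metis
  have eo: "e m \<in> m'" if "m \<in> F" "m' \<in> F" "m' \<noteq> m" for m m' using e[OF that(1)] that by blast
  have mli: "m \<in> F \<Longrightarrow> left_ideal m" for m using F(2) max_left by blast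
  define s where "s = (\<Sum>m\<in>F. e m)"
  have s1: "1 - s \<in> jacobson"
    unfolding F(3)[symmetric]
  proof
    fix m' assume m': "m' \<in> F"
    have "s = e m' + (\<Sum>m\<in>F - {m'}. e m)" unfolding s_def using F(1) m' by (rule sum.remove)
    then have "1 - s = (1 - e m') - (\<Sum>m\<in>F - {m'}. e m)" by (simp add: algebra_simps)
    moreover have "(\<Sum>m\<in>F - {m'}. e m) \<in> m'" using mli[OF m'] eo m' by (intro li_sum) auto
    moreover have "1 - e m' \<in> m'" using e m' by blast
    ultimately show "1 - s \<in> m'" using mli[OF m'] li_diff by metis
  qed
  have yin: "act (e m) x \<in> N (j - 1)" if m: "m \<in> F" for m
  proof (rule ccontr)
    define y where "y = act (e m) x"
    assume "act (e m) x \<notin> N (j - 1)"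
    then have ny: "y \<notin> N (j - 1)" unfolding y_def .
    have yj: "y \<in> N j" unfolding y_def using sj x(1) by (rule submod_act)
    define I1 where "I1 = {b. act b y \<in> N (j - 2)}"
    define I2 where "I2 = {b. act b y \<in> N (j - 1)}"
    have I1li: "left_ideal I1" unfolding I1_def using sj2 by (rule ann_ideal)
    have I2li: "left_ideal I2" unfolding I2_def using sj1 by (rule ann_ideal)
    have I12: "I1 \<subseteq> I2" unfolding I1_def I2_def using j21 by auto
    have n2: "I2 \<noteq> UNIV"
    proof
      assume "I2 = UNIV" then have "1 \<in> I2" by simp
      then show False using ny unfolding I2_def by simp
    qed
    have mI1: "m \<subseteq> I1"
    proof
      fix b assume b: "b \<in> m"
      have "b * e m \<in> \<Inter>F"
      proof
        fix m' assume m': "m' \<in> F"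
        show "b * e m \<in> m'"
        proof (cases "m' = m")
          case True
          have "b * (1 - e m) \<in> m" using e[OF m] mli[OF m] unfolding left_ideal_def by blast
          then have "b - b * (1 - e m) \<in> m" using b li_diff mli[OF m] by blast
          then show ?thesis using True by (simp add: algebra_simps)
        next
          case False
          then have "e m \<in> m'" using eo m m' by blast
          then show ?thesis using mli[OF m'] unfolding left_ideal_def by blast
        qed
      qed
      then have "act (b * e m) x \<in> N (j - 2)" using H x F(3) by blast
      then show "b \<in> I1" unfolding I1_def y_def by (simp add: act_mult)
    qed
    have mm: "maximal_left_ideal m" using F(2) m by blast
    have mmax: "K = m" if "left_ideal K" "m \<subseteq> K" "K \<noteq> UNIV" for K
      using mm that unfolding maximal_left_ideal_def by blast
    have "I1 \<noteq> UNIV" using n2 I12 by blast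
    have "I1 = m" by (rule mmax[OF I1li mI1 \<open>I1 \<noteq> UNIV\<close>])
    moreover have "I2 = m" by (rule mmax[OF I2li _ n2]) (use mI1 I12 in blast)
    ultimately have I21: "I2 \<subseteq> I1" by simp
    define P where "P = {z. \<exists>r\<in>(UNIV::'a set). \<exists>w\<in>N (j - 2). z = act r y + w}"
    have Psub: "submod act P" unfolding P_def using sj2 by (intro ideal_sumset left_ideal_UNIV)
    have "P \<subseteq> N j"
    proof
      fix z assume "z \<in> P"
      then obtain r w where rw: "w \<in> N (j - 2)" "z = act r y + w" unfolding P_def by blast
      have "N (j - 2) \<subseteq> N j" using j by (intro N_mono) auto
      then have "w \<in> N j" using rw by blast
      moreover have "act r y \<in> N j" using sj yj by (rule submod_act)
      ultimately show "z \<in> N j" using sj rw(2) by (simp add: submod_add)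
    qed
    moreover have "\<not> P \<subseteq> N (j - 1)"
    proof
      assume PP: "P \<subseteq> N (j - 1)"
      have "y = act 1 y + 0" by simp
      then have "y \<in> P" unfolding P_def using submod0[OF sj2] by blast
      then show False using ny PP by blast
    qed
    ultimately have PN: "P = N j" by (rule below[OF Psub j(2)])
    from j21 obtain z where z: "z \<in> N (j - 1)" "z \<notin> N (j - 2)" by blast
    then have "z \<in> P" using PN j1j by blast
    then obtain r w where rw: "w \<in> N (j - 2)" "z = act r y + w" unfolding P_def by blast
    then have "act r y = z - w" by simp
    moreover have "z - w \<in> N (j - 1)" by (rule submod_diff[OF sj1 z(1)]) (use rw j21 in blast)
    ultimately have "r \<in> I2" unfolding I2_def by simp
    then have "act r y \<in> N (j - 2)" using I21 unfolding I1_def by auto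
    then have "z \<in> N (j - 2)" using rw sj2 by (simp add: submod_add)
    then show False using z by simp
  qed
  have "act (1 - s) x \<in> N (j - 2)" using H s1 x by blast
  then have a1: "act (1 - s) x \<in> N (j - 1)" using j21 by auto
  have a2: "act s x \<in> N (j - 1)" unfolding s_def act_sum using sj1 yin by (intro submod_sum) auto
  have "x = act (1 - s) x + act s x" by (simp add: act_diffl)
  then have "x \<in> N (j - 1)" using a1 a2 sj1 by (metis submod_add)
  then show False using x by simp
qed

lemma rad_N: "rad_pow act d = N (nn - d)"
proof (induction d)
  case 0 show ?case using Nn by simp
next
  case (Suc d)
  define X where "X = {act a x | a x. a \<in> jacobson \<and> x \<in> rad_pow act d}"
  have rs: "rad_pow act (Suc d) = gen_submod act X" by (simp add: X_def)
  show ?case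
  proof (cases "nn - d = 0")
    case True
    have "X \<subseteq> {0}" unfolding X_def using Suc True N0 by auto
    then have "gen_submod act X \<subseteq> {0}" using submod_zero by (rule gen_submod_least[rotated])
    moreover have "0 \<in> gen_submod act X" using gen_submod_submod submod0 by blast
    ultimately have "gen_submod act X = {0}" by blast
    then show ?thesis using rs True N0 by simp
  next
    case False
    define j where "j = nn - d"
    have j: "1 \<le> j" "j \<le> nn" using False unfolding j_def by auto
    have XN: "X \<subseteq> N (j - 1)"
    proof
      fix y assume "y \<in> X"
      then obtain a x where "y = act a x" "a \<in> jacobson" "x \<in> N j" unfolding X_def using Suc j_def by auto
      then show "y \<in> N (j - 1)" using top_kill j by simp
    qed
    have g1: "gen_submod act X \<subseteq> N (j - 1)" using XN N_submod j by (intro gen_submod_least) auto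
    obtain k where k: "k \<le> nn" "gen_submod act X = N k" using sub_N[OF gen_submod_submod] by blast
    have "k \<le> j - 1" using g1 k N_sub_iff j by auto
    moreover have "\<not> k < j - 1"
    proof
      assume kl: "k < j - 1"
      then have "k \<le> j - 2" by simp
      then have "N k \<subseteq> N (j - 2)" using j by (intro N_mono) auto
      then have "gen_submod act X \<subseteq> N (j - 2)" using k by simp
      then have X2: "X \<subseteq> N (j - 2)" using gen_submod_sup by blast
      have "2 \<le> j" using kl by simp
      then obtain a x where ax: "a \<in> jacobson" "x \<in> N j" "act a x \<notin> N (j - 2)"
        using jac_not_small j by blast
      have "act a x \<in> X" unfolding X_def using ax Suc unfolding j_def by auto
      then show False using X2 ax by auto
    qed
    ultimately have "k = j - 1" by simp
    moreover have "nn - Suc d = j - 1" unfolding j_def by simp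
    ultimately show ?thesis using rs k by simp
  qed
qed

lemma loewy: "loewy_length act = nn"
  unfolding loewy_length_def
proof (rule Least_equality)
  show "rad_pow act nn = {0}" using rad_N N0 by simp
  fix d assume "rad_pow act d = {0}"
  then have "N (nn - d) = N 0" using rad_N N0 by simp
  then have "nn - d = 0" using N_eq_iff by simp
  then show "nn \<le> d" by simp
qed

lemma simple_over_N: assumes l: "l < nn" shows "simple_over act (N l) S \<longleftrightarrow> S = N (Suc l)"
proof
  assume so: "simple_over act (N l) S"
  then have S: "submod act S" "N l \<subset> S" unfolding simple_over_def by auto
  have "N (Suc l) \<subseteq> S" using above S l by blast
  moreover have "N l \<subseteq> N (Suc l)" using l by (intro N_mono) auto
  moreover have "submod act (N (Suc l))" using l N_submod by simp
  ultimately have "N (Suc l) = N l \<or> N (Suc l) = S" using so unfolding simple_over_def by blast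
  moreover have "N l \<noteq> N (Suc l)" using N_eq_iff l by simp
  ultimately show "S = N (Suc l)" by auto
next
  assume S: "S = N (Suc l)"
  show "simple_over act (N l) S"
    unfolding simple_over_def
  proof (intro conjI allI impI)
    show "submod act S" using S l N_submod by simp
    show "N l \<subset> S" using S l N_strict by simp
    fix T assume T: "submod act T \<and> N l \<subseteq> T \<and> T \<subseteq> S"
    show "T = N l \<or> T = S"
    proof (cases "T = N l")
      case False
      then have "N l \<subset> T" using T by blast
      then have "N (Suc l) \<subseteq> T" using above T l by blast
      then show ?thesis using T S by blast
    qed simp
  qed
qed

lemma soc_N: "soc_ser act l = N (min l nn)"
proof (induction l)
  case 0 show ?case using N0 by simp
next
  case (Suc l)
  show ?case
  proof (cases "l < nn")
    case True
    have "{S. simple_over act (soc_ser act l) S} = {N (Suc l)}"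
      using Suc True simple_over_N by auto
    moreover have "N l \<subseteq> N (Suc l)" using True by (intro N_mono) auto
    ultimately have "soc_ser act (Suc l) = gen_submod act (N (Suc l))"
      using Suc True by (simp add: Un_absorb1)
    also have "\<dots> = N (Suc l)" using True N_submod gen_submod_id by simp
    finally show ?thesis using True by simp
  next
    case False
    then have eq: "soc_ser act l = UNIV" using Suc Nn by simp
    have "{S. simple_over act UNIV S} = {}" unfolding simple_over_def by auto
    then have "soc_ser act (Suc l) = UNIV" using eq by (simp add: gen_submod_id submod_UNIV)
    then show ?thesis using False Nn by simp
  qed
qed

end

locale twomod = U1: umod scal act1 + U2: umod scal act2
  for scal :: "'k::field \<Rightarrow> 'a::ring_1 \<Rightarrow> 'a"
  and act1 :: "'a \<Rightarrow> 'm1::ab_group_add \<Rightarrow> 'm1"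
  and act2 :: "'a \<Rightarrow> 'm2::ab_group_add \<Rightarrow> 'm2"
begin

lemma hom_add: "f \<in> hom act1 act2 \<Longrightarrow> f (x + y) = f x + f y" unfolding hom_def by blast
lemma hom_act: "f \<in> hom act1 act2 \<Longrightarrow> f (act1 a x) = act2 a (f x)" unfolding hom_def by blast
lemma hom_0: "f \<in> hom act1 act2 \<Longrightarrow> f 0 = 0" using hom_add[of f 0 0] by simp
lemma hom_neg: "f \<in> hom act1 act2 \<Longrightarrow> f (- x) = - f x"
  using hom_add[of f x "-x"] hom_0[of f] by (metis add.right_inverse minus_unique)
lemma hom_diff: "f \<in> hom act1 act2 \<Longrightarrow> f (x - y) = f x - f y"
  using hom_add[of f x "-y"] hom_neg[of f y] by simp
lemma hom_sm: "f \<in> hom act1 act2 \<Longrightarrow> f (U1.sm c x) = U2.sm c (f x)"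
  by (simp add: U1.sm_def U2.sm_def hom_act)

lemma hom_range_submod: "f \<in> hom act1 act2 \<Longrightarrow> submod act2 (range f)"
  unfolding submod_def
proof (intro conjI ballI allI)
  assume f: "f \<in> hom act1 act2"
  show "0 \<in> range f" using hom_0[OF f] by (metis rangeI)
  fix y assume "y \<in> range f" then obtain x where x: "y = f x" by blast
  { fix y' assume "y' \<in> range f" then obtain x' where "y' = f x'" by blast
    then show "y + y' \<in> range f" using x hom_add[OF f] by (metis rangeI) }
  fix a show "act2 a y \<in> range f" using x hom_act[OF f] by (metis rangeI)
qed

lemma hom_image_submod: "f \<in> hom act1 act2 \<Longrightarrow> submod act1 P \<Longrightarrow> submod act2 (f ` P)"
  unfolding submod_def
proof (intro conjI ballI allI)
  assume f: "f \<in> hom act1 act2" and P: "0 \<in> P \<and> (\<forall>x\<in>P. \<forall>y\<in>P. x + y \<in> P) \<and> (\<forall>a. \<forall>x\<in>P. act1 a x \<in> P)"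
  show "0 \<in> f ` P" using hom_0[OF f] P by (metis imageI)
  fix y assume "y \<in> f ` P" then obtain x where x: "x \<in> P" "y = f x" by blast
  { fix y' assume "y' \<in> f ` P" then obtain x' where "x' \<in> P" "y' = f x'" by blast
    then show "y + y' \<in> f ` P" using x P hom_add[OF f] by (metis imageI) }
  fix a show "act2 a y \<in> f ` P" using x P hom_act[OF f] by (metis imageI)
qed

lemma hom_preimage_submod: "f \<in> hom act1 act2 \<Longrightarrow> submod act2 Q \<Longrightarrow> submod act1 (f -` Q)"
  unfolding submod_def by (auto simp: hom_0 hom_add hom_act)

lemma hom_ker_submod: "f \<in> hom act1 act2 \<Longrightarrow> submod act1 {x. f x = 0}"
  using hom_preimage_submod[of f "{0}"] U2.submod_zero by (simp add: vimage_def)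

lemma card_N_range: 
  assumes "i \<le> U1.nn" shows "card {P. submod act1 P \<and> U1.N i \<subseteq> P} = Suc (U1.nn - i)"
proof -
  have "{P. submod act1 P \<and> U1.N i \<subseteq> P} = U1.N ` {i..U1.nn}"
  proof
    show "{P. submod act1 P \<and> U1.N i \<subseteq> P} \<subseteq> U1.N ` {i..U1.nn}"
    proof
      fix P assume P: "P \<in> {P. submod act1 P \<and> U1.N i \<subseteq> P}"
      then obtain k where k: "k \<le> U1.nn" "P = U1.N k" using U1.sub_N by blast
      then have "i \<le> k" using P assms U1.N_sub_iff by auto
      then show "P \<in> U1.N ` {i..U1.nn}" using k by auto
    qed
  next
    show "U1.N ` {i..U1.nn} \<subseteq> {P. submod act1 P \<and> U1.N i \<subseteq> P}"
    proof
      fix P assume "P \<in> U1.N ` {i..U1.nn}"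
      then obtain k where k: "i \<le> k" "k \<le> U1.nn" "P = U1.N k" by auto
      then show "P \<in> {P. submod act1 P \<and> U1.N i \<subseteq> P}" using U1.N_submod U1.N_mono[of i k] by auto
    qed
  qed
  moreover have "inj_on U1.N {i..U1.nn}" using U1.N_eq_iff by (auto intro!: inj_onI)
  ultimately show ?thesis using assms by (simp add: card_image Suc_diff_le)
qed

lemma card_N2_below:
  assumes "m \<le> U2.nn" shows "card {Q. submod act2 Q \<and> Q \<subseteq> U2.N m} = Suc m"
proof -
  have "{Q. submod act2 Q \<and> Q \<subseteq> U2.N m} = U2.N ` {..m}"
  proof
    show "{Q. submod act2 Q \<and> Q \<subseteq> U2.N m} \<subseteq> U2.N ` {..m}"
    proof
      fix Q assume Q: "Q \<in> {Q. submod act2 Q \<and> Q \<subseteq> U2.N m}"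
      then obtain k where k: "k \<le> U2.nn" "Q = U2.N k" using U2.sub_N by blast
      then have "k \<le> m" using Q assms U2.N_sub_iff by auto
      then show "Q \<in> U2.N ` {..m}" using k by auto
    qed
  next
    show "U2.N ` {..m} \<subseteq> {Q. submod act2 Q \<and> Q \<subseteq> U2.N m}"
      using U2.N_submod U2.N_mono assms by auto
  qed
  moreover have "inj_on U2.N {..m}" using U2.N_eq_iff assms by (auto intro!: inj_onI)
  ultimately show ?thesis by (simp add: card_image)
qed

lemma hom_ker_range:
  assumes f: "f \<in> hom act1 act2" and i: "i \<le> U1.nn" and ker: "{x. f x = 0} = U1.N i"
  shows "U1.nn - i \<le> U2.nn \<and> range f = U2.N (U1.nn - i)"
proof -
  obtain m where m: "m \<le> U2.nn" "range f = U2.N m" using U2.sub_N[OF hom_range_submod[OF f]] by blast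
  let ?A = "{P. submod act1 P \<and> U1.N i \<subseteq> P}"
  let ?B = "{Q. submod act2 Q \<and> Q \<subseteq> U2.N m}"
  have "bij_betw (\<lambda>P. f ` P) ?A ?B"
    unfolding bij_betw_def
  proof
    show "inj_on (\<lambda>P. f ` P) ?A"
    proof (rule inj_onI)
      have sub: "P \<subseteq> P'" if P: "P \<in> ?A" "P' \<in> ?A" "f ` P = f ` P'" for P P'
      proof
        fix x assume x: "x \<in> P"
        then have "f x \<in> f ` P'" using P by blast
        then obtain x' where x': "x' \<in> P'" "f x = f x'" by blast
        then have "f (x - x') = 0" using hom_diff[OF f] by simp
        then have "x - x' \<in> U1.N i" using ker by blast
        then have "x - x' \<in> P'" using P by blast
        then have "(x - x') + x' \<in> P'" using P x' U1.submod_add by blast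
        then show "x \<in> P'" by simp
      qed
      fix P P' assume "P \<in> ?A" "P' \<in> ?A" "f ` P = f ` P'"
      then show "P = P'" using sub[of P P'] sub[of P' P] by blast
    qed
    show "(\<lambda>P. f ` P) ` ?A = ?B"
    proof
      show "(\<lambda>P. f ` P) ` ?A \<subseteq> ?B" using hom_image_submod[OF f] m(2) by auto
      show "?B \<subseteq> (\<lambda>P. f ` P) ` ?A"
      proof
        fix Q assume Q: "Q \<in> ?B"
        have "f -` Q \<in> ?A" using Q hom_preimage_submod[OF f] ker U2.submod0 by auto
        moreover have "Q = f ` (f -` Q)" using Q m(2) by auto
        ultimately show "Q \<in> (\<lambda>P. f ` P) ` ?A" by blast
      qed
    qed
  qed
  then have "card ?A = card ?B" by (rule bij_betw_same_card)
  then have "Suc (U1.nn - i) = Suc m" using card_N_range[OF i] card_N2_below[OF m(1)] by simp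
  then show ?thesis using m by simp
qed

lemma coset_eq: "submod act1 K \<Longrightarrow> coset x K = coset y K \<longleftrightarrow> x - y \<in> K"
proof
  assume K: "submod act1 K" and e: "coset x K = coset y K"
  have "x \<in> coset x K" unfolding coset_def using U1.submod0[OF K] by force
  then have "x \<in> coset y K" using e by simp
  then obtain k where "k \<in> K" "x = y + k" unfolding coset_def by blast
  then show "x - y \<in> K" by simp
next
  assume K: "submod act1 K" and d: "x - y \<in> K"
  show "coset x K = coset y K"
    unfolding coset_def
  proof
    show "(+) x ` K \<subseteq> (+) y ` K"
    proof
      fix z assume "z \<in> (+) x ` K"
      then obtain k where k: "k \<in> K" "z = x + k" by blast
      then have "(x - y) + k \<in> K" using d K U1.submod_add by blast
      moreover have "z = y + ((x - y) + k)" using k by simp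
      ultimately show "z \<in> (+) y ` K" by blast
    qed
    show "(+) y ` K \<subseteq> (+) x ` K"
    proof
      fix z assume "z \<in> (+) y ` K"
      then obtain k where k: "k \<in> K" "z = y + k" by blast
      then have "k - (x - y) \<in> K" using d K U1.submod_diff by blast
      moreover have "z = x + (k - (x - y))" using k by simp
      ultimately show "z \<in> (+) x ` K" by blast
    qed
  qed
qed

lemma qi_props:
  assumes qi: "quot_iso act1 act2 K S phi" and K: "submod act1 K"
  defines "al \<equiv> \<lambda>x. phi (coset x K)"
  shows "al \<in> hom act1 act2" "range al = S" "\<And>x. al x = 0 \<longleftrightarrow> x \<in> K"
proof -
  have bij: "bij_betw phi (range (\<lambda>x. coset x K)) S"
    and add: "\<And>x y. phi (coset (x + y) K) = phi (coset x K) + phi (coset y K)"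
    and ac: "\<And>a x. phi (coset (act1 a x) K) = act2 a (phi (coset x K))"
    using qi unfolding quot_iso_def by auto
  show h: "al \<in> hom act1 act2" unfolding hom_def al_def using add ac by simp
  have "range al = phi ` range (\<lambda>x. coset x K)" unfolding al_def by auto
  then show "range al = S" using bij unfolding bij_betw_def by simp
  fix x
  have a0: "al 0 = 0" by (rule hom_0[OF h])
  show "al x = 0 \<longleftrightarrow> x \<in> K"
  proof
    assume "al x = 0"
    then have "phi (coset x K) = phi (coset 0 K)" using a0 unfolding al_def by simp
    then have "coset x K = coset 0 K" using bij unfolding bij_betw_def inj_on_def by blast
    then show "x \<in> K" using coset_eq[OF K] by simp
  next
    assume "x \<in> K"
    then have "coset x K = coset 0 K" using coset_eq[OF K] by simp
    then show "al x = 0" using a0 unfolding al_def by simp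
  qed
qed

lemma qi_exists:
  assumes f: "f \<in> hom act1 act2"
  shows "quot_iso act1 act2 {x. f x = 0} (range f) (\<lambda>C. f (SOME x. C = coset x {x. f x = 0}))"
proof -
  let ?K = "{x. f x = 0}"
  have K: "submod act1 ?K" by (rule hom_ker_submod[OF f])
  define psi where "psi = (\<lambda>C. f (SOME x. C = coset x ?K))"
  have ps: "psi (coset x ?K) = f x" for x
  proof -
    have "coset x ?K = coset (SOME y. coset x ?K = coset y ?K) ?K" by (rule someI) (rule refl)
    then have "x - (SOME y. coset x ?K = coset y ?K) \<in> ?K" using coset_eq[OF K] by blast
    then show ?thesis unfolding psi_def using hom_diff[OF f] by simp
  qed
  have "bij_betw psi (range (\<lambda>x. coset x ?K)) (range f)"
    unfolding bij_betw_def
  proof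
    show "inj_on psi (range (\<lambda>x. coset x ?K))"
    proof (rule inj_onI)
      fix C D assume "C \<in> range (\<lambda>x. coset x ?K)" "D \<in> range (\<lambda>x. coset x ?K)" "psi C = psi D"
      then obtain x y where xy: "C = coset x ?K" "D = coset y ?K" "f x = f y" using ps by auto
      then have "x - y \<in> ?K" using hom_diff[OF f] by simp
      then show "C = D" using xy coset_eq[OF K] by blast
    qed
    show "psi ` range (\<lambda>x. coset x ?K) = range f" using ps by (auto simp: image_iff)
  qed
  then show ?thesis unfolding quot_iso_def psi_def[symmetric] using ps hom_add[OF f] hom_act[OF f] by simp
qed

end

context twomod begin

lemma S_char: "S_set act1 act2 = {l. 1 \<le> l \<and> l \<le> min U1.nn U2.nn \<and>
   (\<exists>psi. quot_iso act1 act2 (U1.N (U1.nn - l)) (U2.N l) psi)}"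
  unfolding S_set_def U1.loewy U2.loewy
proof (rule Collect_cong)
  fix l
  show "(1 \<le> l \<and> l \<le> min U1.nn U2.nn \<and> (\<exists>psi. quot_iso act1 act2 (rad_pow act1 l) (soc_ser act2 l) psi)) =
        (1 \<le> l \<and> l \<le> min U1.nn U2.nn \<and> (\<exists>psi. quot_iso act1 act2 (U1.N (U1.nn - l)) (U2.N l) psi))"
    using U1.rad_N[of l] U2.soc_N[of l] by (cases "l \<le> U2.nn") (auto simp: min_def)
qed

lemma S_fin: "finite (S_set act1 act2)"
  by (rule finite_subset[of _ "{..U2.nn}"]) (auto simp: S_char)

context
  fixes phi :: "nat \<Rightarrow> 'm1 set \<Rightarrow> 'm2"
  assumes hyp: "\<forall>l\<in>S_set act1 act2. quot_iso act1 act2 (rad_pow act1 l) (soc_ser act2 l) (phi l)"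
begin

lemma S_mem: "l \<in> S_set act1 act2 \<Longrightarrow> 1 \<le> l \<and> l \<le> U1.nn \<and> l \<le> U2.nn"
  by (auto simp: S_char)

lemma al_props:
  assumes l: "l \<in> S_set act1 act2"
  shows "alpha act1 phi l \<in> hom act1 act2" "range (alpha act1 phi l) = U2.N l"
    "\<And>x. alpha act1 phi l x = 0 \<longleftrightarrow> x \<in> U1.N (U1.nn - l)"
proof -
  have lb: "1 \<le> l" "l \<le> U1.nn" "l \<le> U2.nn" using S_mem[OF l] by auto
  have q0: "quot_iso act1 act2 (rad_pow act1 l) (soc_ser act2 l) (phi l)" using hyp l by blast
  have q: "quot_iso act1 act2 (U1.N (U1.nn - l)) (U2.N l) (phi l)"
    using q0 U1.rad_N[of l] U2.soc_N[of l] lb by (simp add: min_def)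
  have K: "submod act1 (U1.N (U1.nn - l))" using U1.N_submod by simp
  have e: "alpha act1 phi l = (\<lambda>x. phi l (coset x (U1.N (U1.nn - l))))"
    by (rule ext) (simp add: alpha_def U1.rad_N)
  show "alpha act1 phi l \<in> hom act1 act2" "range (alpha act1 phi l) = U2.N l"
    "\<And>x. alpha act1 phi l x = 0 \<longleftrightarrow> x \<in> U1.N (U1.nn - l)"
    unfolding e using qi_props[OF q K] by auto
qed

lemma part1: "\<forall>l\<in>S_set act1 act2. alpha act1 phi l \<in> hom act1 act2"
  using al_props(1) by blast

lemma part2:
  assumes H: "(\<lambda>x. \<Sum>l\<in>S_set act1 act2. U2.sm (c l) (alpha act1 phi l x)) = (\<lambda>x. 0)"
  shows "\<forall>l\<in>S_set act1 act2. c l = 0"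
proof (rule ccontr)
  let ?S = "S_set act1 act2"
  let ?Z = "{l\<in>?S. c l \<noteq> 0}"
  assume "\<not> (\<forall>l\<in>?S. c l = 0)"
  then have ne: "?Z \<noteq> {}" by blast
  have fZ: "finite ?Z" using S_fin by simp
  define L where "L = Max ?Z"
  have LZ: "L \<in> ?Z" unfolding L_def using fZ ne by (rule Max_in)
  have hi: "c l = 0" if "l \<in> ?S" "L < l" for l
  proof (rule ccontr)
    assume "c l \<noteq> 0" then have "l \<in> ?Z" using that by blast
    then have "l \<le> L" unfolding L_def by (rule Max_ge[OF fZ])
    then show False using that by simp
  qed
  have LS: "L \<in> ?S" "c L \<noteq> 0" using LZ by auto
  have Lb: "1 \<le> L" "L \<le> U1.nn" "L \<le> U2.nn" using S_mem[OF LS(1)] by auto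
  have "\<exists>x. x \<in> U1.N U1.nn \<and> x \<notin> U1.N (U1.nn - 1)" using U1.exists_gen U1.nn_pos by simp
  then obtain x0 where x0: "x0 \<notin> U1.N (U1.nn - 1)" by blast
  let ?a = "alpha act1 phi L"
  have sL1: "submod act2 (U2.N (L - 1))" using Lb U2.N_submod by simp
  have na: "?a x0 \<notin> U2.N (L - 1)"
  proof
    assume ain: "?a x0 \<in> U2.N (L - 1)"
    have ps: "submod act1 (?a -` U2.N (L - 1))"
      using hom_preimage_submod[OF al_props(1)[OF LS(1)] sL1] .
    obtain k where k: "k \<le> U1.nn" "?a -` U2.N (L - 1) = U1.N k" using U1.sub_N[OF ps] by blast
    have "\<not> k \<le> U1.nn - 1"
    proof
      assume "k \<le> U1.nn - 1"
      then have "U1.N k \<subseteq> U1.N (U1.nn - 1)" by (intro U1.N_mono) auto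
      then show False using x0 ain k by auto
    qed
    then have "k = U1.nn" using k by simp
    then have "?a -` U2.N (L - 1) = UNIV" using k U1.Nn by simp
    then have "range ?a \<subseteq> U2.N (L - 1)" by auto
    moreover have "U2.N (L - 1) \<subset> U2.N L" using Lb by (intro U2.N_strict) auto
    ultimately show False using al_props(2)[OF LS(1)] by simp
  qed
  have rest: "U2.sm (c l) (alpha act1 phi l x0) \<in> U2.N (L - 1)" if l: "l \<in> ?S - {L}" for l
  proof (cases "L < l")
    case True
    then have "c l = 0" using hi l by blast
    then show ?thesis using U2.submod0[OF sL1] by simp
  next
    case False
    then have lL: "l \<le> L - 1" using l by auto
    have "alpha act1 phi l x0 \<in> U2.N l" using al_props(2)[of l] l by blast
    moreover have "U2.N l \<subseteq> U2.N (L - 1)" using lL Lb by (intro U2.N_mono) auto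
    ultimately show ?thesis using sL1 U2.submod_sm by blast
  qed
  have "(\<Sum>l\<in>?S. U2.sm (c l) (alpha act1 phi l x0)) = 0" using H by (metis (no_types, lifting))
  moreover have "(\<Sum>l\<in>?S. U2.sm (c l) (alpha act1 phi l x0)) =
     U2.sm (c L) (?a x0) + (\<Sum>l\<in>?S - {L}. U2.sm (c l) (alpha act1 phi l x0))"
    using S_fin LS(1) by (rule sum.remove)
  ultimately have "U2.sm (c L) (?a x0) = - (\<Sum>l\<in>?S - {L}. U2.sm (c l) (alpha act1 phi l x0))"
    by (simp add: eq_neg_iff_add_eq_0)
  moreover have "- (\<Sum>l\<in>?S - {L}. U2.sm (c l) (alpha act1 phi l x0)) \<in> U2.N (L - 1)"
    using sL1 rest by (intro U2.submod_neg U2.submod_sum) auto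
  ultimately have "U2.sm (c L) (?a x0) \<in> U2.N (L - 1)" by simp
  then have "?a x0 \<in> U2.N (L - 1)" using U2.submod_sm_cancel[OF sL1 LS(2)] by blast
  then show False using na by simp
qed


lemma part3:
  assumes alg: "alg_closed_field TYPE('k)" and f: "f \<in> hom act1 act2"
  shows "\<exists>c. f = (\<lambda>x. \<Sum>l\<in>S_set act1 act2. U2.sm (c l) (alpha act1 phi l x))"
proof -
  let ?S = "S_set act1 act2"
  have main: "\<forall>g\<in>hom act1 act2. range g \<subseteq> U2.N i \<longrightarrow>
      (\<exists>c. g = (\<lambda>x. \<Sum>l\<in>?S. U2.sm (c l) (alpha act1 phi l x)))" if "i \<le> U2.nn" for i
    using that
  proof (induction i)
    case 0
    show ?case
    proof (intro ballI impI)
      fix g assume g: "g \<in> hom act1 act2" "range g \<subseteq> U2.N 0"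
      then have "g = (\<lambda>x. 0)" using U2.N0 by auto
      then show "\<exists>c. g = (\<lambda>x. \<Sum>l\<in>?S. U2.sm (c l) (alpha act1 phi l x))"
        by (intro exI[of _ "\<lambda>_. 0"]) simp
    qed
  next
    case (Suc i)
    have IH: "\<forall>g\<in>hom act1 act2. range g \<subseteq> U2.N i \<longrightarrow>
      (\<exists>c. g = (\<lambda>x. \<Sum>l\<in>?S. U2.sm (c l) (alpha act1 phi l x)))" using Suc by simp
    show ?case
    proof (intro ballI impI)
      fix g assume g: "g \<in> hom act1 act2" "range g \<subseteq> U2.N (Suc i)"
      show "\<exists>c. g = (\<lambda>x. \<Sum>l\<in>?S. U2.sm (c l) (alpha act1 phi l x))"
      proof (cases "range g \<subseteq> U2.N i")
        case True then show ?thesis using IH g by blast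
      next
        case False
        define L where "L = Suc i"
        have Lb: "1 \<le> L" "L \<le> U2.nn" using Suc.prems L_def by auto
        have rg: "range g = U2.N L"
          using U2.below[OF hom_range_submod[OF g(1)] Lb(2)] g(2) False unfolding L_def by simp
        obtain k where k: "k \<le> U1.nn" "{x. g x = 0} = U1.N k"
          using U1.sub_N[OF hom_ker_submod[OF g(1)]] by blast
        have hk: "U1.nn - k \<le> U2.nn \<and> range g = U2.N (U1.nn - k)" using hom_ker_range[OF g(1) k] .
        then have "U2.N (U1.nn - k) = U2.N L" "U1.nn - k \<le> U2.nn" using rg by auto
        then have "U1.nn - k = L" using U2.N_eq_iff Lb by blast
        then have kL: "k = U1.nn - L" "L \<le> U1.nn" using k by auto
        have qi: "quot_iso act1 act2 (U1.N (U1.nn - L)) (U2.N L) (\<lambda>C. g (SOME x. C = coset x {x. g x = 0}))"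
          using qi_exists[OF g(1)] k kL rg by simp
        have LS: "L \<in> ?S" unfolding S_char using Lb kL qi by auto
        let ?a = "alpha act1 phi L"
        have ah: "?a \<in> hom act1 act2" and ar: "range ?a = U2.N L"
          and ak: "\<And>x. ?a x = 0 \<longleftrightarrow> x \<in> U1.N (U1.nn - L)" using al_props[OF LS] by auto
        have kereq: "\<And>x. ?a x = 0 \<longleftrightarrow> g x = 0" using ak k kL by auto
        define T where "T w = g (SOME z. ?a z = w)" for w
        have Ta: "T (?a z) = g z" for z
        proof -
          have "?a (SOME z'. ?a z' = ?a z) = ?a z" by (rule someI) (rule refl)
          then have "?a ((SOME z'. ?a z' = ?a z) - z) = 0" using hom_diff[OF ah] by simp
          then have "g ((SOME z'. ?a z' = ?a z) - z) = 0" using kereq by blast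
          then show ?thesis unfolding T_def using hom_diff[OF g(1)] by simp
        qed
        have inV: "\<exists>z. w = ?a z" if "w \<in> U2.N L" for w using ar that by auto
        have subV: "U2.V.subspace (U2.N L)" using U2.submod_subspace U2.N_submod Lb by simp
        have TV: "\<forall>v\<in>U2.N L. T v \<in> U2.N L"
        proof
          fix v assume "v \<in> U2.N L"
          then obtain z where "v = ?a z" using inV by blast
          then show "T v \<in> U2.N L" using Ta rg by (metis rangeI)
        qed
        have Tadd: "\<forall>x\<in>U2.N L. \<forall>y\<in>U2.N L. T (x + y) = T x + T y"
        proof (intro ballI)
          fix x y assume "x \<in> U2.N L" "y \<in> U2.N L"
          then obtain z1 z2 where "x = ?a z1" "y = ?a z2" using inV by blast
          moreover have "?a z1 + ?a z2 = ?a (z1 + z2)" using hom_add[OF ah] by simp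
          ultimately show "T (x + y) = T x + T y" using Ta hom_add[OF g(1)] by simp
        qed
        have Tsc: "\<forall>c. \<forall>x\<in>U2.N L. T (U2.sm c x) = U2.sm c (T x)"
        proof (intro allI ballI)
          fix c x assume "x \<in> U2.N L"
          then obtain z where z: "x = ?a z" using inV by blast
          have "U2.sm c (?a z) = ?a (U1.sm c z)" using hom_sm[OF ah] by simp
          then show "T (U2.sm c x) = U2.sm c (T x)" using z Ta hom_sm[OF g(1)] by simp
        qed
        have "U2.N 0 \<subset> U2.N L" using Lb by (intro U2.N_strict) auto
        then obtain w where w: "w \<in> U2.N L" "w \<noteq> 0" using U2.N0 by blast
        have "U2.N L \<subseteq> U2.V.span U2.W0" using U2.W0(2) by simp
        then have "\<exists>c u. u \<in> U2.N L \<and> u \<noteq> 0 \<and> T u = U2.sm c u"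
          using U2.V.eigen[OF subV TV Tadd Tsc alg U2.W0(1) _ w] by blast
        then obtain lam u where u: "u \<in> U2.N L" "u \<noteq> 0" "T u = U2.sm lam u" by blast
        obtain z0 where z0: "u = ?a z0" using inV u(1) by blast
        have gz0: "g z0 = U2.sm lam (?a z0)" using Ta u z0 by simp
        define h where "h x = g x - U2.sm lam (?a x)" for x
        have hh: "h \<in> hom act1 act2"
          unfolding hom_def h_def
        proof (intro CollectI conjI allI)
          fix x y
          show "g (x + y) - U2.sm lam (?a (x + y)) = g x - U2.sm lam (?a x) + (g y - U2.sm lam (?a y))"
            using hom_add[OF g(1)] hom_add[OF ah] by (simp add: U2.V.scale_right_distrib)
        next
          fix b x
          show "g (act1 b x) - U2.sm lam (?a (act1 b x)) = act2 b (g x - U2.sm lam (?a x))"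
            using hom_act[OF g(1)] hom_act[OF ah] by (simp add: U2.act_diff U2.act_sm)
        qed
        obtain k' where k': "k' \<le> U1.nn" "{x. h x = 0} = U1.N k'"
          using U1.sub_N[OF hom_ker_submod[OF hh]] by blast
        have sub1: "U1.N (U1.nn - L) \<subseteq> {x. h x = 0}"
        proof
          fix x assume "x \<in> U1.N (U1.nn - L)"
          then have "?a x = 0" "g x = 0" using ak kereq by auto
          then show "x \<in> {x. h x = 0}" unfolding h_def by simp
        qed
        have z0k: "z0 \<in> {x. h x = 0}" unfolding h_def using gz0 by simp
        have z0n: "z0 \<notin> U1.N (U1.nn - L)" using ak u(2) z0 by simp
        have "\<not> k' \<le> U1.nn - L"
        proof
          assume "k' \<le> U1.nn - L"
          then have "U1.N k' \<subseteq> U1.N (U1.nn - L)" by (intro U1.N_mono) auto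
          then show False using z0k z0n k' by auto
        qed
        then have "U1.nn - k' \<le> i" using kL L_def by simp
        moreover have "range h = U2.N (U1.nn - k')" using hom_ker_range[OF hh k'] by simp
        ultimately have "range h \<subseteq> U2.N i" using Suc.prems by (simp add: U2.N_mono)
        then obtain c where c: "h = (\<lambda>x. \<Sum>l\<in>?S. U2.sm (c l) (alpha act1 phi l x))" using IH hh by blast
        define c' where "c' = c(L := c L + lam)"
        have sc: "U2.sm (c' l) v = U2.sm (c l) v + (if l = L then U2.sm lam v else 0)" for l v
          by (simp add: c'_def U2.V.scale_left_distrib)
        have "g = (\<lambda>x. \<Sum>l\<in>?S. U2.sm (c' l) (alpha act1 phi l x))"
        proof
          fix x
          have "g x = h x + U2.sm lam (?a x)" unfolding h_def by simp
          also have "\<dots> = (\<Sum>l\<in>?S. U2.sm (c l) (alpha act1 phi l x)) + U2.sm lam (?a x)" using c by simp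
          also have "\<dots> = (\<Sum>l\<in>?S. U2.sm (c' l) (alpha act1 phi l x))"
            unfolding sc sum.distrib using LS S_fin by (simp add: sum.delta)
          finally show "g x = (\<Sum>l\<in>?S. U2.sm (c' l) (alpha act1 phi l x))" .
        qed
        then show ?thesis by blast
      qed
    qed
  qed
  from main[of U2.nn] show ?thesis using f U2.Nn by simp
qed

end

end

theorem proposition4p2:
  fixes scal :: "'k::field \<Rightarrow> 'a::ring_1 \<Rightarrow> 'a"
    and act1 :: "'a \<Rightarrow> 'm1::ab_group_add \<Rightarrow> 'm1"
    and act2 :: "'a \<Rightarrow> 'm2::ab_group_add \<Rightarrow> 'm2"
    and phi :: "nat \<Rightarrow> 'm1 set \<Rightarrow> 'm2"
  assumes "alg_closed_field TYPE('k)"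
    and "fd_algebra scal"
    and "is_module act1" and "is_module act2"
    and "(UNIV :: 'm1 set) \<noteq> {0}" and "(UNIV :: 'm2 set) \<noteq> {0}"
    and "uniserial act1" and "uniserial act2"
    and "\<forall>l\<in>S_set act1 act2. quot_iso act1 act2 (rad_pow act1 l) (soc_ser act2 l) (phi l)"
  shows "(\<forall>l\<in>S_set act1 act2. alpha act1 phi l \<in> hom act1 act2)
       \<and> (\<forall>c :: nat \<Rightarrow> 'k.
            (\<lambda>x. \<Sum>l\<in>S_set act1 act2. smul scal act2 (c l) (alpha act1 phi l x)) = (\<lambda>x. 0)
            \<longrightarrow> (\<forall>l\<in>S_set act1 act2. c l = 0))
       \<and> (\<forall>f\<in>hom act1 act2. \<exists>c :: nat \<Rightarrow> 'k.
            f = (\<lambda>x. \<Sum>l\<in>S_set act1 act2. smul scal act2 (c l) (alpha act1 phi l x)))"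
proof -
  interpret T: twomod scal act1 act2
    by unfold_locales (use assms in auto)
  show ?thesis
    using T.part1[OF assms(9)] T.part2[OF assms(9)] T.part3[OF assms(9) assms(1)] by blast
qed

end
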